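(* Let $n_2,n_3\ge 2$, $n=1+n_2+n_3$, and consider the Stiefel manifold $V_{1+n_2}\mathbb R^n=\mathrm{SO}(n)/\mathrm{SO}(n_3)$, with $\mathrm{SO}(n_3)$ acting on the last $n_3$ coordinates. Let $I_1=\{1\}$, $I_2=\{2,\dots,1+n_2\}$, $I_3=\{2+n_2,\dots,n\}$, and decompose $\mathfrak m=\mathfrak{so}(n_2)\oplus\mathfrak m_{12}\oplus\mathfrak m_{13}\oplus\mathfrak m_{23}$, where $\mathfrak{so}(n_2)=\mathrm{span}\{\xi_{ab}:a<b,\ a,b\in I_2\}$ and $\mathfrak m_{ij}=\mathrm{span}\{\xi_{ab}:a\in I_i,b\in I_j\}$. Consider the family of metrics $\Lambda=\lambda_2\mathrm{Id}_{\mathfrak{so}(n_2)}+\lambda_{12}\mathrm{Id}_{\mathfrak m_{12}}+\lambda_{13}\mathrm{Id}_{\mathfrak m_{13}}+\lambda_{23}\mathrm{Id}_{\mathfrak m_{23}}$ with all $\lambda$'s positive. For $X=X_{\mathfrak{so}(n_2)}+X_{\mathfrak m_{12}}+X_{\mathfrak m_{13}}+X_{\mathfrak m_{23}}\in\mathfrak m$ (components in the respective summands), $X$ is an equigeodesic vector for this family if and only if $$[X_{\mathfrak{so}(n_2)},X_{\mathfrak m_{12}}]=0,\ [X_{\mathfrak{so}(n_2)},X_{\mathfrak m_{23}}]=0,\ [X_{\mathfrak m_{12}},X_{\mathfrak m_{13}}]_{\mathfrak m}=0,\ [X_{\mathfrak m_{12}},X_{\mathfrak m_{23}}]_{\mathfrak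 m}=0,\ [X_{\mathfrak m_{13}},X_{\mathfrak m_{23}}]_{\mathfrak m}=0.$$
   Context: $E_{ab}$ is the $n\times n$ matrix with $1$ in entry $(a,b)$ and $0$ elsewhere; $\xi_{ab}=E_{ab}-E_{ba}$. $\mathfrak m$ is the orthogonal complement of $\mathfrak{so}(n_3)$ in $\mathfrak{so}(n)$ with respect to the negative of the Killing form; $[\cdot,\cdot]_{\mathfrak m}$ is the $\mathfrak m$-component of the bracket. A nonzero $X\in\mathfrak m$ is an equigeodesic vector (for a given family of $B$-symmetric positive operators $\Lambda$ on $\mathfrak m$) if $[X,\Lambda X]_{\mathfrak m}=0$ for every $\Lambda$ in the family. *)

theory Defs
  imports Complex_Main
begin

text \<open>n x n real matrices are modelled as functions nat => nat => real, indices 1..n,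
  entries outside {1..n} x {1..n} equal to zero.\<close>

type_synonym mat = "nat \<Rightarrow> nat \<Rightarrow> real"

definition supp_in :: "nat set \<Rightarrow> mat \<Rightarrow> bool" where
  "supp_in S A \<longleftrightarrow> (\<forall>i j. (i \<notin> S \<or> j \<notin> S) \<longrightarrow> A i j = 0)"

definition skew :: "mat \<Rightarrow> bool" where
  "skew A \<longleftrightarrow> (\<forall>i j. A i j = - A j i)"

definition so :: "nat \<Rightarrow> mat set" where
  "so n = {A. supp_in {1..n} A \<and> skew A}"

definition E :: "nat \<Rightarrow> nat \<Rightarrow> mat" where
  "E a b = (\<lambda>i j. if i = a \<and> j = b then 1 else 0)"

definition xi :: "nat \<Rightarrow> nat \<Rightarrow> mat" where
  "xi a b = (\<lambda>i j. E a b i j - E b a i j)"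

definition madd :: "mat \<Rightarrow> mat \<Rightarrow> mat" where
  "madd A B = (\<lambda>i j. A i j + B i j)"

definition msub :: "mat \<Rightarrow> mat \<Rightarrow> mat" where
  "msub A B = (\<lambda>i j. A i j - B i j)"

definition mscale :: "real \<Rightarrow> mat \<Rightarrow> mat" where
  "mscale c A = (\<lambda>i j. c * A i j)"

definition mmul :: "nat \<Rightarrow> mat \<Rightarrow> mat \<Rightarrow> mat" where
  "mmul n A B = (\<lambda>i j. \<Sum>k\<in>{1..n}. A i k * B k j)"

definition brk :: "nat \<Rightarrow> mat \<Rightarrow> mat \<Rightarrow> mat" where
  "brk n A B = msub (mmul n A B) (mmul n B A)"

text \<open>Killing form of so(n): trace of ad X o ad Y, computed in the basis
  xi a b (a < b) of so(n); the coefficient of xi a b in a skew matrix Z is Z a b.\<close>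
definition killing :: "nat \<Rightarrow> mat \<Rightarrow> mat \<Rightarrow> real" where
  "killing n X Y = (\<Sum>a\<in>{1..n}. \<Sum>b\<in>{a<..n}. brk n X (brk n Y (xi a b)) a b)"

definition I1 :: "nat set" where "I1 = {1}"
definition I2 :: "nat \<Rightarrow> nat set" where "I2 n2 = {2..1+n2}"
definition I3 :: "nat \<Rightarrow> nat \<Rightarrow> nat set" where "I3 n2 n3 = {2+n2..1+n2+n3}"

definition k_sub :: "nat \<Rightarrow> nat \<Rightarrow> mat set" where
  "k_sub n2 n3 = {A \<in> so (1+n2+n3). supp_in (I3 n2 n3) A}"

definition m_sp :: "nat \<Rightarrow> nat \<Rightarrow> mat set" where
  "m_sp n2 n3 = {X \<in> so (1+n2+n3). \<forall>Y\<in>k_sub n2 n3. - killing (1+n2+n3) X Y = 0}"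

definition mproj :: "nat \<Rightarrow> nat \<Rightarrow> mat \<Rightarrow> mat" where
  "mproj n2 n3 Z = (THE W. W \<in> m_sp n2 n3 \<and> msub Z W \<in> k_sub n2 n3)"

definition mbr :: "nat \<Rightarrow> nat \<Rightarrow> mat \<Rightarrow> mat \<Rightarrow> mat" where
  "mbr n2 n3 A B = mproj n2 n3 (brk (1+n2+n3) A B)"

text \<open>Span of {xi a b : a in S, b in T} (for S, T disjoint or S = T with a < b):
  skew matrices whose nonzero entries lie in (S x T) union (T x S).\<close>
definition blk :: "nat set \<Rightarrow> nat set \<Rightarrow> mat \<Rightarrow> mat" where
  "blk S T A = (\<lambda>i j. if (i \<in> S \<and> j \<in> T) \<or> (i \<in> T \<and> j \<in> S) then A i j else 0)"

definition span_blk :: "nat \<Rightarrow> nat set \<Rightarrow> nat set \<Rightarrow> mat set" where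
  "span_blk n S T = {A \<in> so n. blk S T A = A}"

definition so_n2 :: "nat \<Rightarrow> nat \<Rightarrow> mat set" where
  "so_n2 n2 n3 = span_blk (1+n2+n3) (I2 n2) (I2 n2)"
definition m12 :: "nat \<Rightarrow> nat \<Rightarrow> mat set" where
  "m12 n2 n3 = span_blk (1+n2+n3) I1 (I2 n2)"
definition m13 :: "nat \<Rightarrow> nat \<Rightarrow> mat set" where
  "m13 n2 n3 = span_blk (1+n2+n3) I1 (I3 n2 n3)"
definition m23 :: "nat \<Rightarrow> nat \<Rightarrow> mat set" where
  "m23 n2 n3 = span_blk (1+n2+n3) (I2 n2) (I3 n2 n3)"

definition Lam :: "nat \<Rightarrow> nat \<Rightarrow> real \<Rightarrow> real \<Rightarrow> real \<Rightarrow> real \<Rightarrow> mat \<Rightarrow> mat" where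
  "Lam n2 n3 l2 l12 l13 l23 X =
     madd (madd (mscale l2 (blk (I2 n2) (I2 n2) X)) (mscale l12 (blk I1 (I2 n2) X)))
          (madd (mscale l13 (blk I1 (I3 n2 n3) X)) (mscale l23 (blk (I2 n2) (I3 n2 n3) X)))"

definition metric_family :: "nat \<Rightarrow> nat \<Rightarrow> (mat \<Rightarrow> mat) set" where
  "metric_family n2 n3 = {Lam n2 n3 l2 l12 l13 l23 | l2 l12 l13 l23.
       l2 > 0 \<and> l12 > 0 \<and> l13 > 0 \<and> l23 > 0}"

definition zero_mat :: mat where "zero_mat = (\<lambda>i j. 0)"

definition equigeodesic :: "nat \<Rightarrow> nat \<Rightarrow> (mat \<Rightarrow> mat) set \<Rightarrow> mat \<Rightarrow> bool" where
  "equigeodesic n2 n3 F X \<longleftrightarrow> X \<in> m_sp n2 n3 \<and> X \<noteq> zero_mat \<and>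
     (\<forall>L\<in>F. mbr n2 n3 X (L X) = zero_mat)"

end

theory Submission imports Defs begin

lemma mmul_madd_left: "mmul n (madd A B) C i j = mmul n A C i j + mmul n B C i j"
  by (simp add: mmul_def madd_def distrib_right sum.distrib)
lemma mmul_madd_right: "mmul n A (madd B C) i j = mmul n A B i j + mmul n A C i j"
  by (simp add: mmul_def madd_def distrib_left sum.distrib)
lemma mmul_mscale_right: "mmul n A (mscale c B) i j = c * mmul n A B i j"
  by (simp add: mmul_def mscale_def sum_distrib_left mult_ac)
lemma brk_entry: "brk n A B i j = mmul n A B i j - mmul n B A i j"
  by (simp add: brk_def msub_def)
lemma mmul_nz: "mmul n A B i j \<noteq> 0 \<Longrightarrow> \<exists>k. A i k \<noteq> 0 \<and> B k j \<noteq> 0"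
proof (rule ccontr)
  assume a: "mmul n A B i j \<noteq> 0" and b: "\<not> (\<exists>k. A i k \<noteq> 0 \<and> B k j \<noteq> 0)"
  from b have z: "\<And>k. A i k * B k j = 0" by auto
  have "mmul n A B i j = 0" unfolding mmul_def by (rule sum.neutral) (simp add: z)
  with a show False by simp
qed

lemma so_skew: "A \<in> so n \<Longrightarrow> A i j = - A j i"
  unfolding so_def skew_def by blast
lemma so_supp: "A \<in> so n \<Longrightarrow> i \<notin> {1..n} \<or> j \<notin> {1..n} \<Longrightarrow> A i j = 0"
  by (simp add: so_def supp_in_def)

lemma so_I: "(\<And>i j. A i j = - A j i) \<Longrightarrow> (\<And>i j. i \<notin> {1..n} \<or> j \<notin> {1..n} \<Longrightarrow> A i j = 0) \<Longrightarrow> A \<in> so n"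
  unfolding so_def supp_in_def skew_def by blast

lemma mmul_swap: "A \<in> so n \<Longrightarrow> B \<in> so n \<Longrightarrow> mmul n A B i j = mmul n B A j i"
  unfolding mmul_def
proof (rule sum.cong)
  fix k assume "A \<in> so n" "B \<in> so n"
  then have "A i k = - A k i" "B k j = - B j k" by (auto intro: so_skew)
  then show "A i k * B k j = B j k * A k i" by simp
qed simp

lemma brk_so: assumes "A \<in> so n" "B \<in> so n" shows "brk n A B \<in> so n"
proof -
  have sk: "skew (brk n A B)"
    unfolding skew_def brk_entry
  proof (intro allI)
    fix i j
    show "mmul n A B i j - mmul n B A i j = - (mmul n A B j i - mmul n B A j i)"
      using mmul_swap[OF assms, of i j] mmul_swap[OF assms(2,1), of i j] by simp
  qed
  have "supp_in {1..n} (brk n A B)"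
    unfolding supp_in_def brk_entry mmul_def
    using so_supp[OF assms(1)] so_supp[OF assms(2)] by auto
  with sk show ?thesis by (simp add: so_def)
qed

lemma mmul_xi_right: "a \<in> {1..n} \<Longrightarrow> b \<in> {1..n} \<Longrightarrow> a \<noteq> b \<Longrightarrow>
   mmul n Y (xi a b) i j = (if j = b then Y i a else 0) - (if j = a then Y i b else 0)"
  unfolding mmul_def xi_def E_def
  by (simp add: right_diff_distrib sum_subtractf if_distrib[of "\<lambda>x. Y i _ * x"] sum.delta cong: if_cong)

lemma mmul_xi_left: "a \<in> {1..n} \<Longrightarrow> b \<in> {1..n} \<Longrightarrow> a \<noteq> b \<Longrightarrow>
   mmul n (xi a b) Y i j = (if i = a then Y b j else 0) - (if i = b then Y a j else 0)"
  unfolding mmul_def xi_def E_def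
  by (simp add: left_diff_distrib sum_subtractf if_distrib[of "\<lambda>x. x * Y _ j"] cong: if_cong)

lemma killing_term:
  assumes Y: "Y \<in> so n" and ab: "a \<in> {1..n}" "b \<in> {1..n}" "a \<noteq> b"
  shows "brk n X (brk n Y (xi a b)) a b = (\<Sum>k\<in>{1..n}. X a k * Y k a) + (\<Sum>k\<in>{1..n}. Y b k * X k b) + 2 * X a b * Y a b"
proof -
  have M: "\<And>i j. brk n Y (xi a b) i j = (if j = b then Y i a else 0) - (if j = a then Y i b else 0) - ((if i = a then Y b j else 0) - (if i = b then Y a j else 0))"
    by (simp only: brk_entry mmul_xi_right[OF ab] mmul_xi_left[OF ab])
  have Yd: "Y c c = 0" for c using so_skew[OF Y, of c c] by simp
  have 1: "mmul n X (brk n Y (xi a b)) a b = (\<Sum>k\<in>{1..n}. X a k * Y k a) + X a b * Y a b"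
    unfolding mmul_def M using ab Yd
    by (simp add: right_diff_distrib distrib_left sum_subtractf sum.distrib if_distrib[of "\<lambda>x. X a _ * x"] cong: if_cong)
  have 2: "mmul n (brk n Y (xi a b)) X a b = - (\<Sum>k\<in>{1..n}. Y b k * X k b) - Y a b * X a b"
    unfolding mmul_def M using ab Yd
    by (simp add: left_diff_distrib distrib_right sum_subtractf sum.distrib if_distrib[of "\<lambda>x. x * X _ b"] sum_negf cong: if_cong)
  show ?thesis by (simp add: brk_entry 1 2)
qed

definition kt :: "mat \<Rightarrow> mat \<Rightarrow> nat \<Rightarrow> nat \<Rightarrow> nat \<Rightarrow> real" where
  "kt X Y n a b = (\<Sum>k\<in>{1..n}. X a k * Y k a) + (\<Sum>k\<in>{1..n}. Y b k * X k b) + 2 * X a b * Y a b"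

lemma killing_eq: assumes "Y \<in> so n"
  shows "killing n X Y = (\<Sum>a\<in>{1..n}. \<Sum>b\<in>{a<..n}. kt X Y n a b)"
  unfolding killing_def kt_def
  by (intro sum.cong refl killing_term[OF assms]) auto

definition I3blk :: "nat \<Rightarrow> nat \<Rightarrow> mat \<Rightarrow> bool" where
  "I3blk n2 n3 X \<longleftrightarrow> (\<forall>i j. i \<in> I3 n2 n3 \<and> j \<in> I3 n2 n3 \<longrightarrow> X i j = 0)"

lemma kt_zero:
  assumes "Y \<in> k_sub n2 n3" "I3blk n2 n3 X"
  shows "kt X Y n a b = 0"
proof -
  have Ys: "\<And>i j. Y i j \<noteq> 0 \<Longrightarrow> i \<in> I3 n2 n3 \<and> j \<in> I3 n2 n3"
    using assms(1) by (auto simp: k_sub_def supp_in_def)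
  have X: "\<And>i j. i \<in> I3 n2 n3 \<Longrightarrow> j \<in> I3 n2 n3 \<Longrightarrow> X i j = 0"
    using assms(2) by (auto simp: I3blk_def)
  have z1: "X a k * Y k a = 0" for k using Ys[of k a] X[of a k] by (cases "Y k a = 0") auto
  have z2: "Y b k * X k b = 0" for k using Ys[of b k] X[of k b] by (cases "Y b k = 0") auto
  have z3: "X a b * Y a b = 0" using Ys[of a b] X[of a b] by (cases "Y a b = 0") auto
  have s1: "(\<Sum>k\<in>{1..n}. X a k * Y k a) = 0" by (rule sum.neutral) (simp add: z1)
  have s2: "(\<Sum>k\<in>{1..n}. Y b k * X k b) = 0" by (rule sum.neutral) (simp add: z2)
  show ?thesis unfolding kt_def s1 s2 using z3 by simp
qed

lemma I3_sub: "I3 n2 n3 \<subseteq> {1..1+n2+n3}"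
  by (auto simp: I3_def)

lemma m_sp_char:
  "X \<in> m_sp n2 n3 \<longleftrightarrow> X \<in> so (1+n2+n3) \<and> I3blk n2 n3 X"
proof
  assume "X \<in> so (1+n2+n3) \<and> I3blk n2 n3 X"
  then show "X \<in> m_sp n2 n3"
    unfolding m_sp_def using kt_zero
    by (auto simp: killing_eq k_sub_def)
next
  let ?n = "1+n2+n3"
  assume Xm: "X \<in> m_sp n2 n3"
  then have Xso: "X \<in> so ?n" by (simp add: m_sp_def)
  define Y where "Y = (\<lambda>i j. if i \<in> I3 n2 n3 \<and> j \<in> I3 n2 n3 then X i j else 0)"
  have Yso: "Y \<in> so ?n"
  proof (rule so_I)
    fix i j show "Y i j = - Y j i" using so_skew[OF Xso, of i j] by (simp add: Y_def)
  next
    fix i j assume "i \<notin> {1..?n} \<or> j \<notin> {1..?n}"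
    then show "Y i j = 0" by (auto simp: Y_def I3_def)
  qed
  have Yk: "Y \<in> k_sub n2 n3"
    using Yso unfolding k_sub_def supp_in_def Y_def by auto
  have "killing ?n X Y = 0" using Xm Yk by (auto simp: m_sp_def)
  moreover have "killing ?n X Y = killing ?n Y Y"
  proof -
    have pe1: "X p q * Y q p = Y p q * Y q p" for p q by (simp add: Y_def)
    have pe2: "Y p q * X q p = Y p q * Y q p" for p q by (simp add: Y_def)
    have pe3: "2 * X p q * Y p q = 2 * Y p q * Y p q" for p q by (simp add: Y_def)
    show ?thesis unfolding killing_eq[OF Yso] kt_def pe1 pe2 pe3 ..
  qed
  ultimately have "killing ?n Y Y = 0" by simp
  then have K0: "(\<Sum>a\<in>{1..?n}. \<Sum>b\<in>{a<..?n}. kt Y Y ?n a b) = 0"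
    unfolding killing_eq[OF Yso] .
  have sq: "Y a k * Y k a = - (Y a k * Y a k)" for a k
    using so_skew[OF Yso, of k a] by simp
  have le: "kt Y Y ?n a b \<le> 0" if "a \<in> {1..?n}" "b \<in> {1..?n}" for a b
  proof -
    have "(Y a b)^2 \<le> (\<Sum>k\<in>{1..?n}. (Y a k)^2)"
      by (rule member_le_sum) (use that in auto)
    moreover have "(Y b a)^2 \<le> (\<Sum>k\<in>{1..?n}. (Y b k)^2)"
      by (rule member_le_sum) (use that in auto)
    moreover have "(Y b a)^2 = (Y a b)^2" using so_skew[OF Yso, of a b] by simp
    ultimately show ?thesis
      unfolding kt_def sq by (simp add: sum_negf power2_eq_square)
  qed
  define g where "g = (\<lambda>x. - (\<Sum>b\<in>{x<..?n}. kt Y Y ?n x b))"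
  have gnn: "\<forall>x\<in>{1..?n}. 0 \<le> g x"
    unfolding g_def using le by (auto intro!: sum_nonpos)
  have gs: "(\<Sum>x\<in>{1..?n}. g x) = 0"
    unfolding g_def sum_negf K0 by simp
  have "(\<Sum>x\<in>{1..?n}. g x) = 0 \<longleftrightarrow> (\<forall>x\<in>{1..?n}. g x = 0)"
    by (rule sum_nonneg_eq_0_iff) (simp, use gnn in blast)
  with gs have gz: "\<forall>x\<in>{1..?n}. g x = 0" by blast
  have tz: "kt Y Y ?n a b = 0" if "a \<in> {1..?n}" "b \<in> {a<..?n}" for a b
  proof -
    define h where "h = (\<lambda>y. - kt Y Y ?n a y)"
    have hnn: "\<forall>y\<in>{a<..?n}. 0 \<le> h y" unfolding h_def using le that(1) by auto
    have hs: "(\<Sum>y\<in>{a<..?n}. h y) = 0"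
      using gz that(1) unfolding g_def h_def sum_negf by simp
    have "(\<Sum>y\<in>{a<..?n}. h y) = 0 \<longleftrightarrow> (\<forall>y\<in>{a<..?n}. h y = 0)"
      by (rule sum_nonneg_eq_0_iff) (simp, use hnn in blast)
    with hs that(2) show ?thesis unfolding h_def by simp
  qed
  have "Y i j = 0" if "i \<in> I3 n2 n3" "j \<in> I3 n2 n3" for i j
  proof -
    have i: "i \<in> {1<..?n}" "j \<in> {1..?n}" using that by (auto simp: I3_def)
    have Y1: "\<And>k. Y 1 k = 0" by (simp add: Y_def I3_def)
    have "kt Y Y ?n 1 i = 0" using tz[of 1 i] i by auto
    moreover have "(\<Sum>k\<in>{1..?n}. Y 1 k * Y k 1) = 0" by (rule sum.neutral) (auto simp only: Y1 mult_zero_left)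
    moreover have "Y 1 i = 0" by (rule Y1)
    ultimately have "(\<Sum>k\<in>{1..?n}. Y i k * Y k i) = 0"
      unfolding kt_def by simp
    then have "- (\<Sum>k\<in>{1..?n}. Y i k * Y i k) = 0"
      unfolding sq sum_negf .
    then have s0: "(\<Sum>k\<in>{1..?n}. Y i k * Y i k) = 0" by simp
    have "(\<Sum>k\<in>{1..?n}. Y i k * Y i k) = 0 \<longleftrightarrow> (\<forall>k\<in>{1..?n}. Y i k * Y i k = 0)"
      by (rule sum_nonneg_eq_0_iff) auto
    with s0 have "\<forall>k\<in>{1..?n}. Y i k * Y i k = 0" by blast
    then show ?thesis using i by auto
  qed
  then show "X \<in> so ?n \<and> I3blk n2 n3 X"
    using Xso by (auto simp: I3blk_def Y_def)
qed

definition mcut :: "nat \<Rightarrow> nat \<Rightarrow> mat \<Rightarrow> mat" where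
  "mcut n2 n3 Z = (\<lambda>i j. if i \<in> I3 n2 n3 \<and> j \<in> I3 n2 n3 then 0 else Z i j)"

lemma mproj_eq: assumes Z: "Z \<in> so (1+n2+n3)" shows "mproj n2 n3 Z = mcut n2 n3 Z"
  unfolding mproj_def
proof (rule the_equality)
  have "mcut n2 n3 Z \<in> so (1+n2+n3)"
  proof (rule so_I)
    fix i j show "mcut n2 n3 Z i j = - mcut n2 n3 Z j i" using so_skew[OF Z, of i j] by (simp add: mcut_def)
  next
    fix i j assume "i \<notin> {1..1+n2+n3} \<or> j \<notin> {1..1+n2+n3}"
    then show "mcut n2 n3 Z i j = 0" using so_supp[OF Z] by (simp add: mcut_def)
  qed
  moreover have "I3blk n2 n3 (mcut n2 n3 Z)" by (simp add: I3blk_def mcut_def)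
  ultimately have mS: "mcut n2 n3 Z \<in> m_sp n2 n3" by (simp add: m_sp_char)
  have "msub Z (mcut n2 n3 Z) \<in> so (1+n2+n3)"
  proof (rule so_I)
    fix i j show "msub Z (mcut n2 n3 Z) i j = - msub Z (mcut n2 n3 Z) j i" using so_skew[OF Z, of i j] by (simp add: mcut_def msub_def)
  next
    fix i j assume "i \<notin> {1..1+n2+n3} \<or> j \<notin> {1..1+n2+n3}"
    then show "msub Z (mcut n2 n3 Z) i j = 0" using so_supp[OF Z] by (simp add: mcut_def msub_def)
  qed
  moreover have "supp_in (I3 n2 n3) (msub Z (mcut n2 n3 Z))"
    unfolding supp_in_def mcut_def msub_def by auto
  ultimately have "msub Z (mcut n2 n3 Z) \<in> k_sub n2 n3" by (simp add: k_sub_def)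
  with mS show "mcut n2 n3 Z \<in> m_sp n2 n3 \<and> msub Z (mcut n2 n3 Z) \<in> k_sub n2 n3" by simp
next
  fix W assume W: "W \<in> m_sp n2 n3 \<and> msub Z W \<in> k_sub n2 n3"
  then have "I3blk n2 n3 W" by (simp add: m_sp_char)
  moreover have "\<And>i j. \<not> (i \<in> I3 n2 n3 \<and> j \<in> I3 n2 n3) \<Longrightarrow> Z i j - W i j = 0"
    using W unfolding k_sub_def supp_in_def msub_def by auto
  ultimately show "W = mcut n2 n3 Z"
    by (auto simp: fun_eq_iff mcut_def I3blk_def)
qed

lemma mbr_eq: "A \<in> so (1+n2+n3) \<Longrightarrow> B \<in> so (1+n2+n3) \<Longrightarrow> mbr n2 n3 A B = mcut n2 n3 (brk (1+n2+n3) A B)"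
  by (simp add: mbr_def mproj_eq brk_so)

lemma madd_so: assumes a: "A \<in> so n" and b: "B \<in> so n" shows "madd A B \<in> so n"
proof (rule so_I)
  fix i j show "madd A B i j = - madd A B j i" using so_skew[OF a, of i j] so_skew[OF b, of i j] by (simp add: madd_def)
next
  fix i j assume "i \<notin> {1..n} \<or> j \<notin> {1..n}"
  then show "madd A B i j = 0" using so_supp[OF a] so_supp[OF b] by (simp add: madd_def)
qed
lemma mscale_so: assumes a: "A \<in> so n" shows "mscale c A \<in> so n"
proof (rule so_I)
  fix i j show "mscale c A i j = - mscale c A j i" using so_skew[OF a, of i j] by (simp add: mscale_def)
next
  fix i j assume "i \<notin> {1..n} \<or> j \<notin> {1..n}"
  then show "mscale c A i j = 0" using so_supp[OF a] by (simp add: mscale_def)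
qed

lemma mmul_mscale_left: "mmul n (mscale c A) B i j = c * mmul n A B i j"
  by (simp add: mmul_def mscale_def sum_distrib_left mult_ac)
lemma brk_madd_left: "brk n (madd A B) C i j = brk n A C i j + brk n B C i j"
  by (simp add: brk_entry mmul_madd_left mmul_madd_right)
lemma brk_madd_right: "brk n A (madd B C) i j = brk n A B i j + brk n A C i j"
  by (simp add: brk_entry mmul_madd_left mmul_madd_right)
lemma brk_mscale_right: "brk n A (mscale c B) i j = c * brk n A B i j"
  by (simp add: brk_entry mmul_mscale_left mmul_mscale_right algebra_simps)
lemma brk_self: "brk n A A i j = 0"
  by (simp add: brk_entry)
lemma brk_anti: "brk n B A i j = - brk n A B i j"
  by (simp add: brk_entry)

definition reg :: "nat \<Rightarrow> nat \<Rightarrow> nat \<Rightarrow> nat" where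
  "reg n2 n3 i = (if i = 1 then 1 else if 2 \<le> i \<and> i \<le> 1+n2 then 2
                  else if 2+n2 \<le> i \<and> i \<le> 1+n2+n3 then 3 else 0)"

lemma I1_reg: "i \<in> I1 \<longleftrightarrow> reg n2 n3 i = 1" by (simp add: I1_def reg_def)
lemma I2_reg: "i \<in> I2 n2 \<longleftrightarrow> reg n2 n3 i = 2" by (auto simp: I2_def reg_def)
lemma I3_reg: "i \<in> I3 n2 n3 \<longleftrightarrow> reg n2 n3 i = 3" by (auto simp: I3_def reg_def)

lemma blk_supp: assumes "A \<in> span_blk n S T" "A i j \<noteq> 0" shows "(i \<in> S \<and> j \<in> T) \<or> (i \<in> T \<and> j \<in> S)"
proof -
  have "blk S T A i j = A i j" using assms(1) by (simp add: span_blk_def)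
  then show ?thesis using assms(2) unfolding blk_def by (auto split: if_splits)
qed

lemma brk_nz: "brk n A B i j \<noteq> 0 \<Longrightarrow> \<exists>k. (A i k \<noteq> 0 \<and> B k j \<noteq> 0) \<or> (B i k \<noteq> 0 \<and> A k j \<noteq> 0)"
  unfolding brk_entry by (metis diff_self mmul_nz)

lemma arith4:
  fixes P Q R S T :: real
  assumes "P = 0 \<or> Q = 0" "R = 0 \<or> T = 0" "A \<Longrightarrow> P = 0 \<and> Q = 0"
  shows "((if A then 0 else -P-Q) = 0 \<and> (if A then 0 else P-R-S) = 0 \<and> (if A then 0 else R-T) = 0 \<and> (if A then 0 else Q+S+T) = 0)
     \<longleftrightarrow> (P = 0 \<and> Q = 0 \<and> (if A then 0 else R) = 0 \<and> (if A then 0 else S) = 0 \<and> (if A then 0 else T) = 0)"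
  using assms by (cases A) auto

theorem mainTheorem6:
  fixes n2 n3 :: nat and X X2 X12 X13 X23 :: mat
  assumes "n2 \<ge> 2" and "n3 \<ge> 2"
    and "X2 \<in> so_n2 n2 n3" and "X12 \<in> m12 n2 n3"
    and "X13 \<in> m13 n2 n3" and "X23 \<in> m23 n2 n3"
    and "X = madd (madd X2 X12) (madd X13 X23)"
    and "X \<noteq> zero_mat"
  shows "equigeodesic n2 n3 (metric_family n2 n3) X \<longleftrightarrow>
    (brk (1+n2+n3) X2 X12 = zero_mat \<and>
     brk (1+n2+n3) X2 X23 = zero_mat \<and>
     mbr n2 n3 X12 X13 = zero_mat \<and>
     mbr n2 n3 X12 X23 = zero_mat \<and>
     mbr n2 n3 X13 X23 = zero_mat)"
proof -
  let ?N = "1+n2+n3"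
  let ?r = "reg n2 n3"
  have so2: "X2 \<in> so ?N" and so12: "X12 \<in> so ?N" and so13: "X13 \<in> so ?N" and so23: "X23 \<in> so ?N"
    using assms(3-6) by (auto simp: so_n2_def m12_def m13_def m23_def span_blk_def)
  have s2: "\<And>i j. X2 i j \<noteq> 0 \<Longrightarrow> ?r i = 2 \<and> ?r j = 2"
    using blk_supp[OF assms(3)[unfolded so_n2_def]] by (auto simp: I2_reg[of _ n2 n3])
  have s12: "\<And>i j. X12 i j \<noteq> 0 \<Longrightarrow> (?r i = 1 \<and> ?r j = 2) \<or> (?r i = 2 \<and> ?r j = 1)"
    using blk_supp[OF assms(4)[unfolded m12_def]] by (auto simp: I1_reg[of _ n2 n3] I2_reg[of _ n2 n3])
  have s13: "\<And>i j. X13 i j \<noteq> 0 \<Longrightarrow> (?r i = 1 \<and> ?r j = 3) \<or> (?r i = 3 \<and> ?r j = 1)"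
    using blk_supp[OF assms(5)[unfolded m13_def]] by (auto simp: I1_reg[of _ n2 n3] I3_reg[of _ n2 n3])
  have s23: "\<And>i j. X23 i j \<noteq> 0 \<Longrightarrow> (?r i = 2 \<and> ?r j = 3) \<or> (?r i = 3 \<and> ?r j = 2)"
    using blk_supp[OF assms(6)[unfolded m23_def]] by (auto simp: I2_reg[of _ n2 n3] I3_reg[of _ n2 n3])
  have z2: "\<not> (?r i = 2 \<and> ?r j = 2) \<Longrightarrow> X2 i j = 0" for i j using s2[of i j] by blast
  have z12: "\<not> ((?r i = 1 \<and> ?r j = 2) \<or> (?r i = 2 \<and> ?r j = 1)) \<Longrightarrow> X12 i j = 0" for i j using s12[of i j] by blast
  have z13: "\<not> ((?r i = 1 \<and> ?r j = 3) \<or> (?r i = 3 \<and> ?r j = 1)) \<Longrightarrow> X13 i j = 0" for i j using s13[of i j] by blast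
  have z23: "\<not> ((?r i = 2 \<and> ?r j = 3) \<or> (?r i = 3 \<and> ?r j = 2)) \<Longrightarrow> X23 i j = 0" for i j using s23[of i j] by blast
  have Xso: "X \<in> so ?N" using so2 so12 so13 so23 assms(7) by (simp add: madd_so)
  have Xent: "\<And>i j. X i j = X2 i j + X12 i j + X13 i j + X23 i j"
    using assms(7) by (simp add: madd_def)
  have Xm: "X \<in> m_sp n2 n3"
  proof -
    have "I3blk n2 n3 X"
      unfolding I3blk_def I3_reg[of _ n2 n3] Xent
    proof (intro allI impI)
      fix i j assume ij: "?r i = 3 \<and> ?r j = 3"
      have "X2 i j = 0" using s2[of i j] ij by auto
      moreover have "X12 i j = 0" using s12[of i j] ij by auto
      moreover have "X13 i j = 0" using s13[of i j] ij by auto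
      moreover have "X23 i j = 0" using s23[of i j] ij by auto
      ultimately show "X2 i j + X12 i j + X13 i j + X23 i j = 0" by simp
    qed
    then show ?thesis using Xso by (simp add: m_sp_char)
  qed
  have Lam_eq: "Lam n2 n3 l2 l12 l13 l23 X = madd (madd (mscale l2 X2) (mscale l12 X12)) (madd (mscale l13 X13) (mscale l23 X23))"
    for l2 l12 l13 l23
  proof -
    have "\<And>i j. Lam n2 n3 l2 l12 l13 l23 X i j = l2 * X2 i j + l12 * X12 i j + l13 * X13 i j + l23 * X23 i j"
    proof -
      fix i j
      show "Lam n2 n3 l2 l12 l13 l23 X i j = l2 * X2 i j + l12 * X12 i j + l13 * X13 i j + l23 * X23 i j"
        unfolding Lam_def madd_def mscale_def blk_def Xent I1_reg[of _ n2 n3] I2_reg[of _ n2 n3] I3_reg[of _ n2 n3]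
        using z2[of i j] z12[of i j] z13[of i j] z23[of i j] by (auto simp: algebra_simps)
    qed
    then show ?thesis by (simp add: fun_eq_iff madd_def mscale_def)
  qed
  have Lso: "Lam n2 n3 l2 l12 l13 l23 X \<in> so ?N" for l2 l12 l13 l23
    unfolding Lam_eq using so2 so12 so13 so23 by (simp add: madd_so mscale_so)
  define C where "C = (\<lambda>Y. mcut n2 n3 (brk ?N X Y))"
  have mbrL: "mbr n2 n3 X (Lam n2 n3 l2 l12 l13 l23 X) i j = l2 * C X2 i j + l12 * C X12 i j + l13 * C X13 i j + l23 * C X23 i j"
    for l2 l12 l13 l23 i j
    unfolding Lam_eq mbr_eq[OF Xso Lso[unfolded Lam_eq]] C_def mcut_def
    by (simp add: brk_madd_right brk_mscale_right)
  have step2: "(\<forall>L\<in>metric_family n2 n3. mbr n2 n3 X (L X) = zero_mat) \<longleftrightarrow>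
       (\<forall>i j. C X2 i j = 0 \<and> C X12 i j = 0 \<and> C X13 i j = 0 \<and> C X23 i j = 0)"
  proof
    assume H: "\<forall>L\<in>metric_family n2 n3. mbr n2 n3 X (L X) = zero_mat"
    have H': "l2 * C X2 i j + l12 * C X12 i j + l13 * C X13 i j + l23 * C X23 i j = 0"
      if "l2 > 0" "l12 > 0" "l13 > 0" "l23 > 0" for l2 l12 l13 l23 i j
    proof -
      have "Lam n2 n3 l2 l12 l13 l23 \<in> metric_family n2 n3"
        unfolding metric_family_def using that by blast
      then have "mbr n2 n3 X (Lam n2 n3 l2 l12 l13 l23 X) i j = 0" using H by (simp add: zero_mat_def)
      then show ?thesis by (simp add: mbrL)
    qed
    show "\<forall>i j. C X2 i j = 0 \<and> C X12 i j = 0 \<and> C X13 i j = 0 \<and> C X23 i j = 0"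
    proof (intro allI)
      fix i j
      have "C X2 i j + C X12 i j + C X13 i j + C X23 i j = 0" using H'[of 1 1 1 1 i j] by simp
      moreover have "2 * C X2 i j + C X12 i j + C X13 i j + C X23 i j = 0" using H'[of 2 1 1 1 i j] by simp
      moreover have "C X2 i j + 2 * C X12 i j + C X13 i j + C X23 i j = 0" using H'[of 1 2 1 1 i j] by simp
      moreover have "C X2 i j + C X12 i j + 2 * C X13 i j + C X23 i j = 0" using H'[of 1 1 2 1 i j] by simp
      moreover have "C X2 i j + C X12 i j + C X13 i j + 2 * C X23 i j = 0" using H'[of 1 1 1 2 i j] by simp
      ultimately show "C X2 i j = 0 \<and> C X12 i j = 0 \<and> C X13 i j = 0 \<and> C X23 i j = 0" by linarith
    qed
  next
    assume H: "\<forall>i j. C X2 i j = 0 \<and> C X12 i j = 0 \<and> C X13 i j = 0 \<and> C X23 i j = 0"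
    show "\<forall>L\<in>metric_family n2 n3. mbr n2 n3 X (L X) = zero_mat"
    proof
      fix L assume "L \<in> metric_family n2 n3"
      then obtain l2 l12 l13 l23 where L: "L = Lam n2 n3 l2 l12 l13 l23"
        unfolding metric_family_def by blast
      show "mbr n2 n3 X (L X) = zero_mat"
        unfolding L zero_mat_def fun_eq_iff mbrL using H by simp
    qed
  qed
  have z1: "brk ?N X2 X13 i j = 0" for i j
  proof (rule ccontr)
    assume "brk ?N X2 X13 i j \<noteq> 0"
    then obtain k where "(X2 i k \<noteq> 0 \<and> X13 k j \<noteq> 0) \<or> (X13 i k \<noteq> 0 \<and> X2 k j \<noteq> 0)" using brk_nz by blast
    then show False using s2[of i k] s13[of k j] s13[of i k] s2[of k j] by auto
  qed
  have fP: "brk ?N X2 X12 i j \<noteq> 0 \<Longrightarrow> (?r i = 1 \<and> ?r j = 2) \<or> (?r i = 2 \<and> ?r j = 1)" for i j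
  proof -
    assume "brk ?N X2 X12 i j \<noteq> 0"
    then obtain k where "(X2 i k \<noteq> 0 \<and> X12 k j \<noteq> 0) \<or> (X12 i k \<noteq> 0 \<and> X2 k j \<noteq> 0)" using brk_nz by blast
    then show ?thesis using s2[of i k] s12[of k j] s12[of i k] s2[of k j] by auto
  qed
  have fQ: "brk ?N X2 X23 i j \<noteq> 0 \<Longrightarrow> (?r i = 2 \<and> ?r j = 3) \<or> (?r i = 3 \<and> ?r j = 2)" for i j
  proof -
    assume "brk ?N X2 X23 i j \<noteq> 0"
    then obtain k where "(X2 i k \<noteq> 0 \<and> X23 k j \<noteq> 0) \<or> (X23 i k \<noteq> 0 \<and> X2 k j \<noteq> 0)" using brk_nz by blast
    then show ?thesis using s2[of i k] s23[of k j] s23[of i k] s2[of k j] by auto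
  qed
  have fR: "brk ?N X12 X13 i j \<noteq> 0 \<Longrightarrow> (?r i = 2 \<and> ?r j = 3) \<or> (?r i = 3 \<and> ?r j = 2)" for i j
  proof -
    assume "brk ?N X12 X13 i j \<noteq> 0"
    then obtain k where "(X12 i k \<noteq> 0 \<and> X13 k j \<noteq> 0) \<or> (X13 i k \<noteq> 0 \<and> X12 k j \<noteq> 0)" using brk_nz by blast
    then show ?thesis using s12[of i k] s13[of k j] s13[of i k] s12[of k j] by auto
  qed
  have fT: "brk ?N X13 X23 i j \<noteq> 0 \<Longrightarrow> (?r i = 1 \<and> ?r j = 2) \<or> (?r i = 2 \<and> ?r j = 1) \<or> (?r i = 3 \<and> ?r j = 3)" for i j
  proof -
    assume "brk ?N X13 X23 i j \<noteq> 0"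
    then obtain k where "(X13 i k \<noteq> 0 \<and> X23 k j \<noteq> 0) \<or> (X23 i k \<noteq> 0 \<and> X13 k j \<noteq> 0)" using brk_nz by blast
    then show ?thesis using s13[of i k] s23[of k j] s23[of i k] s13[of k j] by auto
  qed
  have bX: "brk ?N X Y i j = brk ?N X2 Y i j + brk ?N X12 Y i j + brk ?N X13 Y i j + brk ?N X23 Y i j" for Y i j
    unfolding assms(7) by (simp add: brk_madd_left)
  have step4: "(C X2 i j = 0 \<and> C X12 i j = 0 \<and> C X13 i j = 0 \<and> C X23 i j = 0) \<longleftrightarrow>
     (brk ?N X2 X12 i j = 0 \<and> brk ?N X2 X23 i j = 0 \<and> mcut n2 n3 (brk ?N X12 X13) i j = 0 \<and>
      mcut n2 n3 (brk ?N X12 X23) i j = 0 \<and> mcut n2 n3 (brk ?N X13 X23) i j = 0)" for i j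
  proof -
    have c3: "i \<in> I3 n2 n3 \<and> j \<in> I3 n2 n3 \<longleftrightarrow> ?r i = 3 \<and> ?r j = 3" by (simp add: I3_reg[of _ n2 n3])
    have e2: "brk ?N X X2 i j = - brk ?N X2 X12 i j - brk ?N X2 X23 i j"
      using bX[of X2 i j] brk_self[of ?N X2 i j] brk_anti[of ?N X12 X2 i j] brk_anti[of ?N X13 X2 i j]
        brk_anti[of ?N X23 X2 i j] z1[of i j] by simp
    have e12: "brk ?N X X12 i j = brk ?N X2 X12 i j - brk ?N X12 X13 i j - brk ?N X12 X23 i j"
      using bX[of X12 i j] brk_self[of ?N X12 i j] brk_anti[of ?N X13 X12 i j] brk_anti[of ?N X23 X12 i j] by simp
    have e13: "brk ?N X X13 i j = brk ?N X12 X13 i j - brk ?N X13 X23 i j"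
      using bX[of X13 i j] brk_self[of ?N X13 i j] brk_anti[of ?N X23 X13 i j] z1[of i j] by simp
    have e23: "brk ?N X X23 i j = brk ?N X2 X23 i j + brk ?N X12 X23 i j + brk ?N X13 X23 i j"
      using bX[of X23 i j] brk_self[of ?N X23 i j] by simp
    have PQ: "brk ?N X2 X12 i j = 0 \<or> brk ?N X2 X23 i j = 0"
    proof (rule ccontr)
      assume "\<not> ?thesis"
      then have "brk ?N X2 X12 i j \<noteq> 0" "brk ?N X2 X23 i j \<noteq> 0" by simp_all
      from fP[OF this(1)] fQ[OF this(2)] show False by auto
    qed
    have RT: "brk ?N X12 X13 i j = 0 \<or> brk ?N X13 X23 i j = 0"
    proof (rule ccontr)
      assume "\<not> ?thesis"
      then have "brk ?N X12 X13 i j \<noteq> 0" "brk ?N X13 X23 i j \<noteq> 0" by simp_all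
      from fR[OF this(1)] fT[OF this(2)] show False by auto
    qed
    have A: "brk ?N X2 X12 i j = 0 \<and> brk ?N X2 X23 i j = 0" if r3: "?r i = 3 \<and> ?r j = 3"
    proof (rule conjI; rule ccontr)
      assume "brk ?N X2 X12 i j \<noteq> 0"
      from fP[OF this] r3 show False by auto
    next
      assume "brk ?N X2 X23 i j \<noteq> 0"
      from fQ[OF this] r3 show False by auto
    qed
    show ?thesis
      unfolding C_def mcut_def c3 e2 e12 e13 e23
      by (rule arith4[OF PQ RT A])
  qed
  have rhs: "(brk ?N X2 X12 = zero_mat \<and> brk ?N X2 X23 = zero_mat \<and> mbr n2 n3 X12 X13 = zero_mat \<and>
     mbr n2 n3 X12 X23 = zero_mat \<and> mbr n2 n3 X13 X23 = zero_mat) \<longleftrightarrow>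
     (\<forall>i j. brk ?N X2 X12 i j = 0 \<and> brk ?N X2 X23 i j = 0 \<and> mcut n2 n3 (brk ?N X12 X13) i j = 0 \<and>
      mcut n2 n3 (brk ?N X12 X23) i j = 0 \<and> mcut n2 n3 (brk ?N X13 X23) i j = 0)"
    using so12 so13 so23 by (auto simp: mbr_eq fun_eq_iff zero_mat_def)
  show ?thesis
    unfolding equigeodesic_def rhs step2 using Xm assms(8) step4 by blast
qed

end
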